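(* Let $\delta>0$. If the distribution function $F$ of the conductances varies regularly at zero with index $\gamma>0$, then $\mathbb P$-a.s. for all $n$ large enough $\lambda_1^{(n)}\le n^{-\frac1{2\gamma}+\delta}$. If moreover $F(a)=a^\gamma$ for all $a\in[0,1]$, then for every $\epsilon>0$, $\mathbb P$-a.s. for all $n$ large enough $\lambda_1^{(n)}\le 2d\, n^{-\frac1{2\gamma}}\big((2+\epsilon)\log\log n\big)^{\frac1{2d\gamma}}$.
   Context: Let $d\ge 2$, $\mathfrak E_d$ the nearest-neighbour edges of $\mathbb Z^d$, $x\sim y$ if $|x-y|_1=1$. Conductances $(w_e)_{e\in\mathfrak E_d}$ are i.i.d. $(0,\infty)$-valued with law $\mathbb P$, and $F(u)=\mathbb P[w\le u]$. $B_n=[-n,n]^d\cap\mathbb Z^d$. $\mathcal E^{\boldsymbol w}(f)=\frac12\sum_{x}\sum_{y\sim x}w_{xy}(f(x)-f(y))^2$ and $\lambda_1^{(n)}=\inf\{\mathcal E^{\boldsymbol w}(f): f\in\ell^2(\mathbb Z^d)\text{ real},\ \mathrm{supp}\,f\subseteq B_n,\ \|f\|_2=1\}$ (principal Dirichlet eigenvalue of $-\mathcal L_{\boldsymbol w}$, $(\mathcal L_{\boldsymbol w}f)(x)=\sum_{y\sim x}w_{xy}(f(y)-f(x))$, in $B_n$). $F$ varies regularly at zero with index $\gamma$ if $F(u)=u^\gamma L(u)$ with $L(Cu)/L(u)\to1$ as $u\to0$ for all $C>0$. *)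

theory Defs
  imports "HOL-Probability.Probability"
begin

text \<open>Points of Z^d are vectors int^'d, the dimension d being CARD('d).\<close>

definition nn_adj :: "int^'d \<Rightarrow> int^'d \<Rightarrow> bool" where
  "nn_adj x y \<longleftrightarrow> (\<Sum>i\<in>UNIV. \<bar>x$i - y$i\<bar>) = 1"

definition nn_edges :: "(int^'d) set set" where
  "nn_edges = {{x, y} | x y. nn_adj x y}"

definition box :: "nat \<Rightarrow> (int^'d) set" where
  "box n = {x. \<forall>i. \<bar>x$i\<bar> \<le> int n}"

definition dir_energy :: "((int^'d) set \<Rightarrow> real) \<Rightarrow> (int^'d \<Rightarrow> real) \<Rightarrow> real" where
  "dir_energy w f = (1/2) * (\<Sum>\<^sub>\<infinity>x\<in>UNIV. (\<Sum>y\<in>{y. nn_adj x y}. w {x, y} * (f x - f y)^2))"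

text \<open>Principal Dirichlet eigenvalue of the generator in B_n (variational characterisation).\<close>
definition lambda1 :: "((int^'d) set \<Rightarrow> real) \<Rightarrow> nat \<Rightarrow> real" where
  "lambda1 w n = Inf {dir_energy w f | f :: int^'d \<Rightarrow> real.
       (\<forall>x. x \<notin> box n \<longrightarrow> f x = 0) \<and> (\<Sum>\<^sub>\<infinity>x\<in>UNIV. (f x)^2) = 1}"

definition regvar_zero :: "(real \<Rightarrow> real) \<Rightarrow> real \<Rightarrow> bool" where
  "regvar_zero F \<gamma> \<longleftrightarrow> (\<exists>L. (\<forall>u>0. F u = u powr \<gamma> * L u) \<and>
      (\<forall>C>0. ((\<lambda>u. L (C * u) / L u) \<longlongrightarrow> 1) (at_right 0)))"

end

theory Submission
  imports Defs "HOL-Real_Asymp.Real_Asymp"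
begin


definition shiftv :: "int^'d \<Rightarrow> 'd \<Rightarrow> int \<Rightarrow> int^'d" where
  "shiftv x i s = (\<chi> j. if j = i then x$j + s else x$j)"

lemma nn_adj_sym: "nn_adj x y = nn_adj y x"
  unfolding nn_adj_def by (simp add: abs_minus_commute)

lemma nn_adj_irrefl: "\<not> nn_adj x x"
  unfolding nn_adj_def by simp

lemma shiftv_adj: "s \<in> {-1,1} \<Longrightarrow> nn_adj x (shiftv x i s)"
proof -
  assume s: "s \<in> {-1,1}"
  have "(\<Sum>j\<in>UNIV. \<bar>x$j - shiftv x i s $ j\<bar>) = (\<Sum>j\<in>UNIV. if j = i then 1 else 0)"
    by (rule sum.cong) (use s in \<open>auto simp: shiftv_def\<close>)
  also have "\<dots> = 1" by simp
  finally show ?thesis unfolding nn_adj_def .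
qed

lemma nn_adj_shiftv:
  assumes "nn_adj x y" shows "\<exists>i s. s \<in> {-1,1} \<and> y = shiftv x i s"
proof -
  define t where "t j = \<bar>x$j - y$j\<bar>" for j
  have S: "(\<Sum>j\<in>UNIV. t j) = 1" using assms unfolding nn_adj_def t_def by simp
  have t0: "t j \<ge> 0" for j unfolding t_def by simp
  obtain i where i: "t i \<noteq> 0"
  proof (rule ccontr)
    assume "\<not> thesis" with that have "\<forall>j. t j = 0" by blast
    then show False using S by simp
  qed
  have split: "(\<Sum>j\<in>UNIV. t j) = t i + (\<Sum>j\<in>UNIV-{i}. t j)"
    by (simp add: sum.remove)
  have rest: "(\<Sum>j\<in>UNIV-{i}. t j) \<ge> 0" by (rule sum_nonneg) (simp add: t0)
  have ti: "t i = 1" using S split rest i t0[of i] by linarith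
  have "(\<Sum>j\<in>UNIV-{i}. t j) = 0" using S split ti by linarith
  then have oth: "\<forall>j\<in>UNIV-{i}. t j = 0"
    using sum_nonneg_eq_0_iff[of "UNIV-{i}" t] t0 by simp
  define s where "s = y$i - x$i"
  have "s \<in> {-1,1}" using ti unfolding t_def s_def by (auto simp: abs_if split: if_splits)
  moreover have "y = shiftv x i s"
    unfolding vec_eq_iff shiftv_def s_def using oth unfolding t_def by auto
  ultimately show ?thesis by blast
qed

lemma nbrs_eq: "{y. nn_adj x y} = (\<lambda>(i,s). shiftv x i s) ` (UNIV \<times> {-1,1})"
  using nn_adj_shiftv shiftv_adj by fastforce

lemma nbrs_finite: "finite {y. nn_adj (x::int^'d) y}"
  unfolding nbrs_eq by simp

lemma nbrs_card: "card {y. nn_adj (x::int^'d) y} \<le> 2 * CARD('d)"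
proof -
  have "card {y. nn_adj x y} \<le> card ((UNIV::'d set) \<times> {-1::int,1})"
    unfolding nbrs_eq by (intro card_image_le) auto
  also have "\<dots> = 2 * CARD('d)" by (simp add: card_cartesian_product)
  finally show ?thesis .
qed

lemma nbrs_nonempty: "{y. nn_adj (x::int^'d) y} \<noteq> {}"
  using shiftv_adj[of 1 x undefined] by auto

lemma shiftv_sum: "(\<Sum>j\<in>UNIV. shiftv x i s $ j) = (\<Sum>j\<in>UNIV. x$j) + s"
proof -
  have "(\<Sum>j\<in>UNIV. shiftv x i s $ j) = (\<Sum>j\<in>UNIV. x$j + (if j = i then s else 0))"
    by (rule sum.cong) (auto simp: shiftv_def)
  also have "\<dots> = (\<Sum>j\<in>UNIV. x$j) + s" by (simp add: sum.distrib)
  finally show ?thesis .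
qed

lemma adj_parity: "nn_adj x y \<Longrightarrow> odd ((\<Sum>j\<in>UNIV. x$j) + (\<Sum>j\<in>UNIV. y$j))"
proof -
  assume "nn_adj x y"
  then obtain i s where s: "s \<in> {-1,1}" and y: "y = shiftv x i s" using nn_adj_shiftv by blast
  have "(\<Sum>j\<in>UNIV. x$j) + (\<Sum>j\<in>UNIV. y$j) = 2 * (\<Sum>j\<in>UNIV. x$j) + s"
    unfolding y shiftv_sum by simp
  then show ?thesis using s by auto
qed

lemma energy_nonneg:
  assumes "\<forall>x y. nn_adj x y \<longrightarrow> w {x,y} \<ge> 0"
  shows "dir_energy w f \<ge> 0"
  unfolding dir_energy_def using assms
  by (intro mult_nonneg_nonneg infsum_nonneg sum_nonneg) auto

lemma energy_delta:
  fixes x :: "int^'d"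
  shows "dir_energy w (\<lambda>z. if z = x then 1 else 0) = (\<Sum>y\<in>{y. nn_adj x y}. w {x,y})"
proof -
  define S where "S = (\<Sum>y\<in>{y. nn_adj x y}. w {x,y})"
  define g where "g z = (\<Sum>y\<in>{y. nn_adj z y}. w {z, y} * ((if z = x then 1 else 0) - (if y = x then 1 else 0))^2)" for z :: "int^'d"
  have g: "g z = (if z = x then S else if nn_adj x z then w {x,z} else 0)" for z
  proof (cases "z = x")
    case True
    then show ?thesis unfolding g_def S_def
      by (auto intro!: sum.cong simp: nn_adj_irrefl)
  next
    case False
    have "g z = (\<Sum>y\<in>{y. nn_adj z y}. if y = x then w {z,y} else 0)"
      unfolding g_def using False by (intro sum.cong) auto
    also have "\<dots> = (if nn_adj x z then w {x,z} else 0)"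
      using nbrs_finite[of z] by (simp add: nn_adj_sym insert_commute)
    finally show ?thesis using False by simp
  qed
  have fin: "finite (insert x {y. nn_adj x y})" using nbrs_finite by simp
  have "(\<Sum>\<^sub>\<infinity>z\<in>UNIV. g z) = (\<Sum>\<^sub>\<infinity>z\<in>insert x {y. nn_adj x y}. g z)"
    by (rule infsum_cong_neutral) (auto simp: g)
  also have "\<dots> = (\<Sum>z\<in>insert x {y. nn_adj x y}. g z)" using fin by simp
  also have "\<dots> = g x + (\<Sum>z\<in>{y. nn_adj x y}. g z)"
    using nbrs_finite[of x] by (simp add: nn_adj_irrefl)
  also have "\<dots> = 2 * S" unfolding g using nn_adj_irrefl[of x]
    by (simp add: S_def) (smt (verit) mem_Collect_eq sum.cong)
  finally show ?thesis unfolding dir_energy_def g_def S_def by simp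
qed

lemma lambda1_le_star:
  fixes w :: "(int^'d) set \<Rightarrow> real" and x :: "int^'d"
  assumes nonneg: "\<forall>x y. nn_adj x y \<longrightarrow> w {x,y} \<ge> 0"
    and xb: "x \<in> box n"
    and le: "\<forall>y. nn_adj x y \<longrightarrow> w {x,y} \<le> a"
  shows "lambda1 w n \<le> 2 * real CARD('d) * a"
proof -
  define dx where "dx = (\<lambda>z::int^'d. if z = x then 1 else (0::real))"
  have "(\<Sum>\<^sub>\<infinity>z\<in>UNIV. (dx z)^2) = (\<Sum>\<^sub>\<infinity>z\<in>{x}. (dx z)^2)"
    by (rule infsum_cong_neutral) (auto simp: dx_def)
  also have "\<dots> = 1" by (simp add: dx_def)
  finally have n1: "(\<Sum>\<^sub>\<infinity>z\<in>UNIV. (dx z)^2) = 1" .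
  have mem: "dir_energy w dx \<in> {dir_energy w f | f :: int^'d \<Rightarrow> real.
       (\<forall>x. x \<notin> box n \<longrightarrow> f x = 0) \<and> (\<Sum>\<^sub>\<infinity>x\<in>UNIV. (f x)^2) = 1}"
    using n1 xb by (auto simp: dx_def)
  have bdd: "bdd_below {dir_energy w f | f :: int^'d \<Rightarrow> real.
       (\<forall>x. x \<notin> box n \<longrightarrow> f x = 0) \<and> (\<Sum>\<^sub>\<infinity>x\<in>UNIV. (f x)^2) = 1}"
    by (rule bdd_belowI[of _ 0]) (use energy_nonneg[OF nonneg] in auto)
  have "lambda1 w n \<le> dir_energy w dx"
    unfolding lambda1_def by (rule cInf_lower[OF mem bdd])
  also have "\<dots> = (\<Sum>y\<in>{y. nn_adj x y}. w {x,y})" unfolding dx_def by (rule energy_delta)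
  also have "\<dots> \<le> of_nat (card {y. nn_adj x y}) * a"
    by (rule sum_bounded_above) (use le in auto)
  also have "\<dots> \<le> 2 * real CARD('d) * a"
  proof -
    obtain y where y: "nn_adj x y" using nbrs_nonempty[of x] by auto
    have "a \<ge> 0" using nonneg le y by force
    moreover have "real (card {y. nn_adj x y}) \<le> 2 * real CARD('d)"
      using nbrs_card[of x] by linarith
    ultimately show ?thesis by (simp add: mult_right_mono)
  qed
  finally show ?thesis .
qed




definition evbox :: "nat \<Rightarrow> (int^'d) set" where
  "evbox n = {x \<in> box n. even (\<Sum>j\<in>UNIV. x$j)}"

lemma box_eq: "box n = (\<lambda>f. vec_lambda f) ` (PiE UNIV (\<lambda>_. {-int n..int n}))"
proof (rule set_eqI, rule iffI)
  fix x :: "int^'d" assume "x \<in> box n"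
  then have ab: "\<bar>x$j\<bar> \<le> int n" for j by (auto simp: box_def)
  have "-int n \<le> x$j \<and> x$j \<le> int n" for j using ab[of j] by arith
  then have "(\<lambda>j. x$j) \<in> PiE UNIV (\<lambda>_. {-int n..int n})" by auto
  moreover have "x = vec_lambda (\<lambda>j. x$j)" by simp
  ultimately show "x \<in> (\<lambda>f. vec_lambda f) ` (PiE UNIV (\<lambda>_. {-int n..int n}))" by blast
next
  fix x :: "int^'d" assume "x \<in> (\<lambda>f. vec_lambda f) ` (PiE UNIV (\<lambda>_. {-int n..int n}))"
  then obtain f where "f \<in> PiE UNIV (\<lambda>_. {-int n..int n})" and x: "x = vec_lambda f" by auto
  then have "-int n \<le> f j \<and> f j \<le> int n" for j by auto
  then have "\<bar>f j\<bar> \<le> int n" for j by (simp add: abs_le_iff) (meson minus_le_iff)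
  then show "x \<in> box n" by (simp add: box_def x)
qed

lemma box_finite: "finite (box n :: (int^'d) set)"
  unfolding box_eq by (intro finite_imageI finite_PiE) auto

lemma evbox_sub: "evbox n \<subseteq> box n" unfolding evbox_def by auto

lemma evbox_finite: "finite (evbox n :: (int^'d) set)"
  using box_finite finite_subset[OF evbox_sub] by blast

lemma evbox_nonadj: "x \<in> evbox n \<Longrightarrow> y \<in> evbox n \<Longrightarrow> \<not> nn_adj x y"
  unfolding evbox_def using adj_parity[of x y] by auto

lemma evbox_card_nat: "n * (2*n+1)^(CARD('d) - 1) \<le> card (evbox n :: (int^'d) set)"
proof -
  define i0 :: 'd where "i0 = undefined"
  define T where "T = {-(int n div 2) .. (int n - 1) div 2}"
  define D where "D = PiE (UNIV - {i0}) (\<lambda>_. {-int n..int n}) \<times> T"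
  define phi where "phi = (\<lambda>(f, t). (\<chi> j. if j = i0 then 2*t + (\<Sum>k\<in>UNIV-{i0}. f k) mod 2 else f j) :: int^'d)"
  have cT: "card T = n" unfolding T_def by simp
  have cD: "card D = (2*n+1)^(CARD('d) - 1) * n"
  proof -
    have "card (PiE (UNIV - {i0}) (\<lambda>_. {-int n..int n})) = (2*n+1)^(card (UNIV - {i0}))"
      by (simp add: card_PiE) (simp add: nat_add_distrib nat_mult_distrib)
    moreover have "card (UNIV - {i0}) = CARD('d) - 1" by (simp add: card_Diff_singleton)
    ultimately show ?thesis unfolding D_def using cT by (simp add: card_cartesian_product)
  qed
  have sub: "phi ` D \<subseteq> evbox n"
  proof
    fix z assume "z \<in> phi ` D"
    then obtain f t where f: "f \<in> PiE (UNIV - {i0}) (\<lambda>_. {-int n..int n})" and t: "t \<in> T"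
      and z: "z = phi (f,t)" unfolding D_def by auto
    define s where "s = (\<Sum>k\<in>UNIV-{i0}. f k)"
    have zi0: "z$i0 = 2*t + s mod 2" unfolding z phi_def s_def by simp
    have zj: "j \<noteq> i0 \<Longrightarrow> z$j = f j" for j unfolding z phi_def by simp
    have "\<bar>z$j\<bar> \<le> int n" for j
    proof (cases "j = i0")
      case True
      have "s mod 2 \<ge> 0" "s mod 2 \<le> 1" by auto
      then show ?thesis using t True zi0 unfolding T_def by (simp add: abs_le_iff) presburger
    next
      case False
      have "-int n \<le> f j \<and> f j \<le> int n" using f False by (auto simp: PiE_iff)
      then show ?thesis using zj[OF False] by (simp add: abs_le_iff)
    qed
    then have zb: "z \<in> box n" by (simp add: box_def)
    have "(\<Sum>j\<in>UNIV. z$j) = z$i0 + (\<Sum>j\<in>UNIV-{i0}. z$j)" by (simp add: sum.remove)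
    also have "(\<Sum>j\<in>UNIV-{i0}. z$j) = s" unfolding s_def by (rule sum.cong) (auto simp: zj)
    finally have "(\<Sum>j\<in>UNIV. z$j) = 2*t + s mod 2 + s" using zi0 by simp
    then have "even (\<Sum>j\<in>UNIV. z$j)" by presburger
    then show "z \<in> evbox n" using zb by (simp add: evbox_def)
  qed
  have inj: "inj_on phi D"
  proof (rule inj_onI)
    fix p q assume p: "p \<in> D" and q: "q \<in> D" and eq: "phi p = phi q"
    obtain f t where pf: "p = (f,t)" and f: "f \<in> PiE (UNIV - {i0}) (\<lambda>_. {-int n..int n})"
      using p unfolding D_def by auto
    obtain g u where qg: "q = (g,u)" and g: "g \<in> PiE (UNIV - {i0}) (\<lambda>_. {-int n..int n})"
      using q unfolding D_def by auto
    have comp: "(phi p)$j = (phi q)$j" for j using eq by simp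
    have fg: "f = g"
    proof
      fix j show "f j = g j"
      proof (cases "j = i0")
        case True then show ?thesis using f g by (auto simp: PiE_iff extensional_def)
      next
        case False then show ?thesis using comp[of j] unfolding pf qg phi_def by simp
      qed
    qed
    have "2*t + (\<Sum>k\<in>UNIV-{i0}. f k) mod 2 = 2*u + (\<Sum>k\<in>UNIV-{i0}. g k) mod 2"
      using comp[of i0] unfolding pf qg phi_def by simp
    then have "t = u" using fg by simp
    then show "p = q" using pf qg fg by simp
  qed
  have "card D \<le> card (evbox n :: (int^'d) set)"
    by (rule card_inj_on_le[OF inj sub evbox_finite])
  then show ?thesis using cD by (simp add: mult.commute)
qed

lemma evbox_card:
  "2 ^ (CARD('d) - 1) * real n ^ CARD('d) \<le> real (card (evbox n :: (int^'d) set))"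
proof -
  have d1: "CARD('d) = Suc (CARD('d) - 1)" by simp
  have "2 ^ (CARD('d) - 1) * real n ^ CARD('d) = real n * (2 * real n) ^ (CARD('d) - 1)"
  proof -
    have "real n ^ CARD('d) = real n * real n ^ (CARD('d) - 1)" by (metis d1 power_Suc)
    then show ?thesis by (simp add: power_mult_distrib)
  qed
  also have "\<dots> \<le> real n * (2 * real n + 1) ^ (CARD('d) - 1)"
    by (intro mult_left_mono power_mono) auto
  also have "\<dots> = real (n * (2*n+1)^(CARD('d) - 1))" by (simp add: add.commute)
  also have "\<dots> \<le> real (card (evbox n :: (int^'d) set))"
    using evbox_card_nat by (simp only: of_nat_le_iff)
  finally show ?thesis .
qed



definition star :: "int^'d \<Rightarrow> (int^'d) set set" where
  "star x = (\<lambda>y. {x,y}) ` {y. nn_adj x y}"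

lemma star_sub: "star x \<subseteq> nn_edges"
  unfolding star_def nn_edges_def by auto

lemma star_finite: "finite (star x)" unfolding star_def using nbrs_finite[of x] by simp

lemma star_nonempty: "star x \<noteq> {}" unfolding star_def using nbrs_nonempty by simp

lemma star_card: "card (star (x::int^'d)) \<le> 2 * CARD('d)"
  unfolding star_def using card_image_le[OF nbrs_finite, of "\<lambda>y. {x,y}" x] nbrs_card[of x] by linarith

lemma star_disj:
  assumes "\<And>x y. x \<in> S \<Longrightarrow> y \<in> S \<Longrightarrow> \<not> nn_adj x y"
  shows "disjoint_family_on star S"
  unfolding disjoint_family_on_def
proof (intro ballI impI)
  fix x x' assume x: "x \<in> S" and x': "x' \<in> S" and ne: "x \<noteq> x'"
  show "star x \<inter> star x' = {}"
  proof (rule ccontr)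
    assume "star x \<inter> star x' \<noteq> {}"
    then obtain y y' where y: "nn_adj x y" and y': "nn_adj x' y'" and eq: "{x,y} = {x',y'}"
      unfolding star_def by auto
    then have "x = y' \<and> y = x'" using ne by (auto simp: doubleton_eq_iff)
    then show False using y assms x x' by auto
  qed
qed

definition Gev :: "'a measure \<Rightarrow> ((int^'d) set \<Rightarrow> 'a \<Rightarrow> real) \<Rightarrow> real \<Rightarrow> int^'d \<Rightarrow> 'a set" where
  "Gev M W a x = {\<omega> \<in> space M. \<forall>y. nn_adj x y \<longrightarrow> W {x,y} \<omega> \<le> a}"

definition Aev :: "'a measure \<Rightarrow> ((int^'d) set \<Rightarrow> 'a \<Rightarrow> real) \<Rightarrow> real \<Rightarrow> (int^'d) set \<Rightarrow> 'a set" where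
  "Aev M W a e = {\<omega> \<in> space M. W e \<omega> \<le> a}"

lemma Gev_eq: "Gev M W a x = (\<Inter>e\<in>star x. Aev M W a e)"
  using star_nonempty[of x] unfolding Gev_def Aev_def star_def by auto

context
  fixes M :: "'a measure" and W :: "(int^'d) set \<Rightarrow> 'a \<Rightarrow> real" and F :: "real \<Rightarrow> real"
  assumes P: "prob_space M"
    and indep: "prob_space.indep_vars M (\<lambda>_. borel) W (nn_edges :: (int^'d) set set)"
    and law: "\<forall>e\<in>nn_edges. \<forall>u. measure M {\<omega>\<in>space M. W e \<omega> \<le> u} = F u"
begin

interpretation prob_space M by (rule P)

lemma Aev_indep: "indep_events (Aev M W a) nn_edges"
  unfolding Aev_def by (rule indep_eventsI_indep_vars[OF indep]) auto

lemma Aev_sets: "e \<in> nn_edges \<Longrightarrow> Aev M W a e \<in> sets M"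
  using Aev_indep by (auto simp: indep_events_def)

lemma Gev_sets: "Gev M W a x \<in> sets M"
  unfolding Gev_eq using star_finite star_nonempty star_sub[of x] Aev_sets[of _ a]
  by (intro sets.finite_INT) auto

lemma Gev_prob: "prob (Gev M W a (x::int^'d)) = F a ^ card (star x)"
proof -
  have "prob (Gev M W a x) = (\<Prod>e\<in>star x. prob (Aev M W a e))"
  proof -
    have "\<forall>J\<subseteq>nn_edges. J \<noteq> {} \<longrightarrow> finite J \<longrightarrow> prob (\<Inter>j\<in>J. Aev M W a j) = (\<Prod>j\<in>J. prob (Aev M W a j))"
      using Aev_indep[of a] unfolding indep_events_def by blast
    then show ?thesis unfolding Gev_eq using star_sub[of x] star_nonempty[of x] star_finite[of x] by simp
  qed
  also have "\<dots> = (\<Prod>e\<in>star x. F a)"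
    using law star_sub unfolding Aev_def by (intro prod.cong) auto
  finally show ?thesis by simp
qed

lemma F_props: "0 \<le> F u" "F u \<le> 1" "u \<le> v \<Longrightarrow> F u \<le> F v"
proof -
  obtain e where e: "e \<in> (nn_edges :: (int^'d) set set)"
    using star_nonempty star_sub by blast
  have eq: "F t = prob (Aev M W t e)" for t using law e unfolding Aev_def by auto
  show "0 \<le> F u" "F u \<le> 1" unfolding eq by auto
  show "u \<le> v \<Longrightarrow> F u \<le> F v" unfolding eq
    by (rule finite_measure_mono) (use Aev_sets[OF e, of v] in \<open>auto simp: Aev_def\<close>)
qed

lemma Gev_prob_ge: "F a ^ (2 * CARD('d)) \<le> prob (Gev M W a (x::int^'d))"
  unfolding Gev_prob by (rule power_decreasing[OF star_card]) (auto intro: F_props)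

lemma Gev_compl_indep:
  assumes "\<And>x y. x \<in> S \<Longrightarrow> y \<in> S \<Longrightarrow> \<not> nn_adj x y"
  shows "indep_events (\<lambda>x. space M - Gev M W a (x::int^'d)) S"
proof -
  have i0: "indep_sets (\<lambda>e. {Aev M W a e}) nn_edges"
    using Aev_indep[of a] unfolding indep_events_def_alt .
  have sub0: "(\<Union>x\<in>S. star x) \<subseteq> nn_edges" using star_sub by blast
  have i1: "indep_sets (\<lambda>e. {Aev M W a e}) (\<Union>x\<in>S. star x)"
    by (rule indep_sets_mono_index[OF sub0 i0])
  have i2: "indep_sets (\<lambda>x. sigma_sets (space M) (\<Union>e\<in>star x. {Aev M W a e})) S"
  proof (rule indep_sets_collect_sigma[OF i1])
    show "Int_stable {Aev M W a e}" for e by (simp add: Int_stable_def)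
    show "disjoint_family_on star S" by (rule star_disj[OF assms])
  qed
  show ?thesis unfolding indep_events_def_alt
  proof (rule indep_sets_mono_sets[OF i2])
    fix x assume "x \<in> S"
    have sub: "(\<Union>e\<in>star x. {Aev M W a e}) \<subseteq> Pow (space M)" by (auto simp: Aev_def)
    interpret sa: sigma_algebra "space M" "sigma_sets (space M) (\<Union>e\<in>star x. {Aev M W a e})"
      by (rule sigma_algebra_sigma_sets[OF sub])
    have "Gev M W a x \<in> sigma_sets (space M) (\<Union>e\<in>star x. {Aev M W a e})"
      unfolding Gev_eq using star_finite star_nonempty
      by (intro sa.finite_INT) (auto intro: sigma_sets.Basic)
    then have "space M - Gev M W a x \<in> sigma_sets (space M) (\<Union>e\<in>star x. {Aev M W a e})"
      by (rule sigma_sets.Compl)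
    then show "{space M - Gev M W a x} \<subseteq> sigma_sets (space M) (\<Union>e\<in>star x. {Aev M W a e})"
      by (simp only: insert_subset empty_subsetI simp_thms)
  qed
qed

lemma fail_prob:
  assumes S: "finite S" and nonadj: "\<And>x y. x \<in> S \<Longrightarrow> y \<in> S \<Longrightarrow> \<not> nn_adj x y"
  shows "prob (\<Inter>x\<in>S. space M - Gev M W a (x::int^'d)) \<le> exp (- real (card S) * F a ^ (2 * CARD('d)))"
proof (cases "S = {}")
  case True then show ?thesis by simp
next
  case False
  define p where "p = F a ^ (2 * CARD('d))"
  have "prob (\<Inter>x\<in>S. space M - Gev M W a x) = (\<Prod>x\<in>S. prob (space M - Gev M W a x))"
    using Gev_compl_indep[OF nonadj] S False by (auto simp: indep_events_def)
  also have "\<dots> = (\<Prod>x\<in>S. 1 - prob (Gev M W a x))"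
    by (intro prod.cong) (auto simp: prob_compl Gev_sets)
  also have "\<dots> \<le> (\<Prod>x\<in>S. exp (- p))"
  proof (rule prod_mono)
    fix x assume "x \<in> S"
    have "1 - prob (Gev M W a x) \<le> 1 - p" using Gev_prob_ge unfolding p_def by simp
    also have "\<dots> \<le> exp (- p)" using exp_ge_add_one_self[of "-p"] by simp
    finally show "0 \<le> 1 - prob (Gev M W a x) \<and> 1 - prob (Gev M W a x) \<le> exp (- p)" by simp
  qed
  also have "\<dots> = exp (- real (card S) * p)" by (simp add: exp_of_nat_mult[symmetric])
  finally show ?thesis unfolding p_def .
qed

end



lemma rv_lower:
  fixes F :: "real \<Rightarrow> real"
  assumes rv: "regvar_zero F \<gamma>" and mono: "\<And>u v. u \<le> v \<Longrightarrow> F u \<le> F v"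
    and nonneg: "\<And>u. F u \<ge> 0" and eta: "\<eta> > 0" and gam: "\<gamma> > 0"
  shows "\<exists>u1>0. \<exists>c>0. \<forall>u. 0 < u \<and> u \<le> u1 \<longrightarrow> c * u powr (\<gamma> + \<eta>) \<le> F u"
proof -
  obtain L where FL: "\<And>u. u > 0 \<Longrightarrow> F u = u powr \<gamma> * L u"
    and lim: "\<And>C. C > 0 \<Longrightarrow> ((\<lambda>u. L (C * u) / L u) \<longlongrightarrow> 1) (at_right 0)"
    using rv unfolding regvar_zero_def by blast
  define q where "q = (2::real) powr (-\<eta>)"
  have q0: "q > 0" unfolding q_def by simp
  have q1: "q < 1" unfolding q_def using powr_less_mono[of "-\<eta>" 0 2] eta by simp
  have "eventually (\<lambda>u. L ((1/2) * u) / L u > q) (at_right 0)"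
    using order_tendstoD(1)[OF lim[of "1/2"] q1] by simp
  then have "\<exists>b>0. \<forall>y>0. y < b \<longrightarrow> L ((1/2) * y) / L y > q"
    using eventually_at_right[of "0::real" 1] by simp
  then obtain b where b: "b > 0" and bP: "\<And>u. u > 0 \<Longrightarrow> u < b \<Longrightarrow> L ((1/2) * u) / L u > q"
    by blast
  define u1 where "u1 = b / 2"
  have u1: "u1 > 0" "u1 < b" using b by (auto simp: u1_def)
  have Lpos: "L u > 0" and Lstep: "L ((1/2) * u) \<ge> q * L u" if "0 < u" "u \<le> u1" for u
  proof -
    have r: "L ((1/2) * u) / L u > q" using bP[of u] that u1 by auto
    have "u powr \<gamma> > 0" using that by simp
    moreover have "F u = u powr \<gamma> * L u" using FL that by simp
    ultimately have "L u \<ge> 0" using nonneg[of u] by (simp add: zero_le_mult_iff)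
    moreover have "L u \<noteq> 0" using r q0 by auto
    ultimately show Lp: "L u > 0" by simp
    show "L ((1/2) * u) \<ge> q * L u" using r Lp by (simp add: pos_less_divide_eq)
  qed
  have dy: "L (u1 / 2^k) \<ge> q^k * L u1" for k
  proof (induction k)
    case 0 then show ?case by simp
  next
    case (Suc k)
    have a: "0 < u1 / 2^k" "u1 / 2^k \<le> u1" using u1 by (auto simp: divide_le_eq)
    have "L (u1 / 2^Suc k) = L ((1/2) * (u1 / 2^k))" by simp
    also have "\<dots> \<ge> q * L (u1 / 2^k)" using Lstep[OF a] .
    finally have "L (u1 / 2^Suc k) \<ge> q * L (u1 / 2^k)" .
    moreover have "q * L (u1 / 2^k) \<ge> q * (q^k * L u1)"
      using Suc q0 by (simp add: mult_left_mono)
    ultimately show ?case by simp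
  qed
  define c where "c = L u1 * u1 powr (-\<eta>) * 2 powr (-(\<gamma>+\<eta>))"
  have c: "c > 0" unfolding c_def using Lpos[of u1] u1 by simp
  have "c * u powr (\<gamma> + \<eta>) \<le> F u" if u: "0 < u" "u \<le> u1" for u
  proof -
    obtain n where n: "u1 / u < 2^n" using real_arch_pow[of 2 "u1/u"] by auto
    have ex: "\<exists>n. u1 / 2^n < u" using n u by (auto simp: divide_less_eq mult.commute)
    define k where "k = (LEAST n. u1 / 2^n < u)"
    have k1: "u1 / 2^k < u" unfolding k_def by (rule LeastI_ex[OF ex])
    have "k \<noteq> 0"
    proof
      assume "k = 0" then show False using k1 u by simp
    qed
    then obtain j where kj: "k = Suc j" by (cases k) auto
    have "\<not> (u1 / 2^j < u)" using not_less_Least[of j "\<lambda>n. u1 / 2^n < u"] kj k_def by simp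
    then have uj: "u \<le> u1 / 2^j" by simp
    define v where "v = u1 / 2^k"
    have v0: "v > 0" unfolding v_def using u1 by simp
    have vu: "v < u" "u / 2 \<le> v" using k1 uj unfolding v_def kj by (auto simp: field_simps)
    have Fv: "F u \<ge> v powr \<gamma> * L v" using mono[of v u] vu FL[OF v0] by simp
    have Lv: "L v \<ge> q^k * L u1" unfolding v_def by (rule dy)
    have qk: "q^k = (v / u1) powr \<eta>"
    proof -
      have "q^k = (2 powr (-\<eta>)) powr real k" unfolding q_def by (simp add: powr_realpow)
      also have "\<dots> = ((2::real)^k) powr (-\<eta>)" by (simp add: powr_powr powr_realpow[symmetric] mult.commute)
      also have "\<dots> = (v / u1) powr \<eta>" unfolding v_def using u1
        by (simp add: powr_minus_divide powr_divide)
      finally show ?thesis .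
    qed
    have "v powr \<gamma> * ((v / u1) powr \<eta> * L u1) \<le> v powr \<gamma> * L v"
      using Lv qk v0 by (intro mult_left_mono) auto
    then have "F u \<ge> v powr \<gamma> * ((v / u1) powr \<eta> * L u1)" using Fv by linarith
    also have "v powr \<gamma> * ((v / u1) powr \<eta> * L u1) = L u1 * u1 powr (-\<eta>) * v powr (\<gamma> + \<eta>)"
      using v0 u1 by (simp add: powr_add powr_divide powr_minus field_simps)
    finally have A: "F u \<ge> L u1 * u1 powr (-\<eta>) * v powr (\<gamma> + \<eta>)" .
    have "v powr (\<gamma> + \<eta>) \<ge> (u/2) powr (\<gamma> + \<eta>)"
      using vu u gam eta by (intro powr_mono2) auto
    then have "L u1 * u1 powr (-\<eta>) * (u/2) powr (\<gamma> + \<eta>) \<le> L u1 * u1 powr (-\<eta>) * v powr (\<gamma> + \<eta>)"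
      using Lpos[of u1] u1 by (intro mult_left_mono) auto
    moreover have "L u1 * u1 powr (-\<eta>) * (u/2) powr (\<gamma> + \<eta>) = c * u powr (\<gamma> + \<eta>)"
    proof -
      have "(u/2) powr (\<gamma> + \<eta>) = u powr (\<gamma> + \<eta>) / 2 powr (\<gamma> + \<eta>)"
        using u by (intro powr_divide)
      also have "\<dots> = 2 powr (-(\<gamma>+\<eta>)) * u powr (\<gamma> + \<eta>)"
        by (simp only: powr_minus divide_inverse mult.commute)
      finally show ?thesis unfolding c_def by (simp only: mult.assoc)
    qed
    ultimately show ?thesis using A by linarith
  qed
  then show ?thesis using c u1 by blast
qed




lemma box_mono: "m \<le> n \<Longrightarrow> box m \<subseteq> box n"
  unfolding box_def by (clarsimp, meson of_nat_le_iff order_trans)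

context
  fixes M :: "'a measure" and W :: "(int^'d) set \<Rightarrow> 'a \<Rightarrow> real" and F :: "real \<Rightarrow> real"
  assumes P: "prob_space M"
    and indep: "prob_space.indep_vars M (\<lambda>_. borel) W (nn_edges :: (int^'d) set set)"
    and law: "\<forall>e\<in>nn_edges. \<forall>u. measure M {\<omega>\<in>space M. W e \<omega> \<le> u} = F u"
    and pos: "\<forall>e\<in>nn_edges. \<forall>\<omega>\<in>space M. W e \<omega> > 0"
begin

interpretation prob_space M by (rule P)

lemma bc_gen:
  fixes m :: "nat \<Rightarrow> nat" and a :: "nat \<Rightarrow> real"
  assumes summ: "summable (\<lambda>k. exp (- real (card (evbox (m k) :: (int^'d) set)) * F (a k) ^ (2 * CARD('d))))"
  shows "AE \<omega> in M. eventually (\<lambda>k. \<forall>n\<ge>m k. lambda1 (\<lambda>e. W e \<omega>) n \<le> 2 * real CARD('d) * a k) sequentially"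
proof -
  define A where "A k = space M - (\<Union>x\<in>(evbox (m k) :: (int^'d) set). Gev M W (a k) x)" for k
  have Asets: "A k \<in> sets M" for k
    unfolding A_def using evbox_finite Gev_sets[OF P indep law]
    by (intro sets.Diff sets.top sets.finite_UN) blast+
  have Ale: "measure M (A k) \<le> exp (- real (card (evbox (m k) :: (int^'d) set)) * F (a k) ^ (2 * CARD('d)))" for k
  proof (cases "evbox (m k) = ({} :: (int^'d) set)")
    case True then show ?thesis unfolding A_def by simp
  next
    case False
    have "A k = (\<Inter>x\<in>(evbox (m k) :: (int^'d) set). space M - Gev M W (a k) x)"
      unfolding A_def using False by auto
    then show ?thesis using fail_prob[OF P indep law evbox_finite evbox_nonadj] by simp
  qed
  have summA: "summable (\<lambda>k. measure M (A k))"
    by (rule summable_comparison_test'[OF summ]) (use Ale in auto)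
  have ae: "AE \<omega> in M. eventually (\<lambda>k. \<omega> \<in> space M - A k) sequentially"
    by (rule borel_cantelli_AE1) (auto simp: Asets summA less_top[symmetric])
  show ?thesis
  proof (rule AE_mp[OF ae], rule AE_I2, rule impI)
    fix \<omega> assume om: "\<omega> \<in> space M" and ev: "eventually (\<lambda>k. \<omega> \<in> space M - A k) sequentially"
    have nonneg: "\<forall>x y. nn_adj x y \<longrightarrow> W {x,y} \<omega> \<ge> 0"
    proof (intro allI impI)
      fix x y :: "int^'d" assume "nn_adj x y"
      then have "{x,y} \<in> nn_edges" unfolding nn_edges_def by blast
      then show "W {x,y} \<omega> \<ge> 0" using pos om by (meson less_imp_le)
    qed
    show "eventually (\<lambda>k. \<forall>n\<ge>m k. lambda1 (\<lambda>e. W e \<omega>) n \<le> 2 * real CARD('d) * a k) sequentially"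
    proof (rule eventually_mono[OF ev], intro allI impI)
      fix k n assume k: "\<omega> \<in> space M - A k" and n: "m k \<le> n"
      then obtain x where x: "x \<in> (evbox (m k) :: (int^'d) set)" and g: "\<omega> \<in> Gev M W (a k) x"
        unfolding A_def using om by auto
      have xb: "x \<in> box n" using x evbox_sub box_mono[OF n] by blast
      show "lambda1 (\<lambda>e. W e \<omega>) n \<le> 2 * real CARD('d) * a k"
        by (rule lambda1_le_star[OF _ xb]) (use nonneg g in \<open>auto simp: Gev_def\<close>)
    qed
  qed
qed

end



context
  fixes M :: "'a measure" and W :: "(int^'d) set \<Rightarrow> 'a \<Rightarrow> real" and F :: "real \<Rightarrow> real"
    and \<gamma> :: real
  assumes P: "prob_space M"
    and indep: "prob_space.indep_vars M (\<lambda>_. borel) W (nn_edges :: (int^'d) set set)"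
    and law: "\<forall>e\<in>nn_edges. \<forall>u. measure M {\<omega>\<in>space M. W e \<omega> \<le> u} = F u"
    and pos: "\<forall>e\<in>nn_edges. \<forall>\<omega>\<in>space M. W e \<omega> > 0"
    and gpos: "\<gamma> > 0"
begin

interpretation prob_space M by (rule P)

lemma Fmono: "u \<le> v \<Longrightarrow> F u \<le> F v" and Fnn: "F u \<ge> 0"
  using F_props[OF P indep law] by auto

lemma part1:
  assumes rv: "regvar_zero F \<gamma>" and dpos: "\<delta> > 0"
  shows "AE \<omega> in M. eventually (\<lambda>n. lambda1 (\<lambda>e. W e \<omega>) n
                 \<le> real n powr (- 1 / (2 * \<gamma>) + \<delta>)) sequentially"
proof -
  define N where "N = 2 * CARD('d)"
  define d where "d = real CARD('d)"
  have d1: "d \<ge> 1" unfolding d_def by simp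
  have Nd: "real N = 2 * d" unfolding N_def d_def by simp
  define \<delta>' where "\<delta>' = min \<delta> (1/(4*\<gamma>))"
  have dp: "\<delta>' > 0" "\<delta>' \<le> \<delta>" "\<delta>' \<le> 1/(4*\<gamma>)" unfolding \<delta>'_def using dpos gpos by auto
  define \<beta> where "\<beta> = -1/(2*\<gamma>) + \<delta>'"
  have bneg: "\<beta> < 0"
  proof -
    have "1/(4*\<gamma>) < 1/(2*\<gamma>)" using gpos by (simp add: frac_less2)
    then show ?thesis unfolding \<beta>_def using dp by linarith
  qed
  have ble: "\<beta> \<le> -1/(2*\<gamma>) + \<delta>" unfolding \<beta>_def using dp by simp
  define \<eta> where "\<eta> = \<delta>' * \<gamma>^2"
  have eta: "\<eta> > 0" unfolding \<eta>_def using dp gpos by simp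
  obtain u1 c where u1: "u1 > 0" and c: "c > 0"
    and Flow: "\<And>u. 0 < u \<Longrightarrow> u \<le> u1 \<Longrightarrow> c * u powr (\<gamma> + \<eta>) \<le> F u"
    using rv_lower[OF rv Fmono Fnn eta gpos] by blast
  define g where "g = \<gamma> + \<eta>"
  define a where "a k = real k powr \<beta> / (2*d)" for k :: nat
  define \<kappa> where "\<kappa> = d + 2*d*\<beta>*g"
  have kap_eq: "\<kappa> = d * (\<delta>'*\<gamma> + 2*\<delta>'^2*\<gamma>^2)"
    unfolding \<kappa>_def \<beta>_def g_def \<eta>_def using gpos by (simp add: field_simps power2_eq_square)
  have kap: "\<kappa> > 0" unfolding kap_eq using d1 dp gpos by (intro mult_pos_pos add_pos_nonneg) auto
  define C where "C = c ^ N / (2*d) powr (2*d*g)"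
  have Cpos: "C > 0" unfolding C_def using c d1 by simp
  have key: "C * real k powr \<kappa> \<le> real (card (evbox k :: (int^'d) set)) * F (a k) ^ N"
    if k1: "k \<ge> 1" and ak: "a k \<le> u1" for k
  proof -
    have ak0: "a k > 0" unfolding a_def using k1 d1 by simp
    have Fa: "c * a k powr g \<le> F (a k)" using Flow[OF ak0 ak] unfolding g_def .
    have c0: "0 \<le> c * a k powr g" using c by simp
    have "(c * a k powr g) ^ N \<le> F (a k) ^ N" by (rule power_mono[OF Fa c0])
    moreover have "real k ^ CARD('d) \<le> real (card (evbox k :: (int^'d) set))"
    proof -
      have "(1::real) \<le> 2 ^ (CARD('d) - 1)" by simp
      then have "real k ^ CARD('d) \<le> 2 ^ (CARD('d) - 1) * real k ^ CARD('d)"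
        using mult_right_mono[of 1 "2 ^ (CARD('d) - 1)" "real k ^ CARD('d)"] by simp
      also have "\<dots> \<le> real (card (evbox k :: (int^'d) set))" by (rule evbox_card)
      finally show ?thesis .
    qed
    ultimately have "real k ^ CARD('d) * (c * a k powr g) ^ N \<le> real (card (evbox k :: (int^'d) set)) * F (a k) ^ N"
      using c0 by (intro mult_mono) auto
    moreover have "real k ^ CARD('d) * (c * a k powr g) ^ N = C * real k powr \<kappa>"
    proof -
      have kpos: "real k > 0" using k1 by simp
      have e1: "real k ^ CARD('d) = real k powr d" unfolding d_def using kpos by (simp add: powr_realpow)
      have e2: "(a k powr g) ^ N = a k powr (2 * d * g)" using ak0 Nd by (simp add: powr_power)
      have e3: "a k powr (2*d*g) = real k powr (\<beta> * (2*d*g)) / (2*d) powr (2*d*g)"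
        unfolding a_def using kpos d1 by (simp add: powr_divide powr_powr)
      have "real k ^ CARD('d) * (c * a k powr g) ^ N = c ^ N / (2*d) powr (2*d*g) * (real k powr d * real k powr (\<beta> * (2*d*g)))"
        unfolding e1 power_mult_distrib e2 e3 by (simp add: field_simps)
      also have "\<dots> = C * real k powr \<kappa>" unfolding C_def \<kappa>_def by (simp add: powr_add[symmetric] field_simps)
      finally show ?thesis .
    qed
    ultimately show ?thesis by simp
  qed
  have alim: "(a \<longlongrightarrow> 0) sequentially" unfolding a_def using bneg d1 by real_asymp
  have ev_a: "eventually (\<lambda>k. a k < u1) sequentially" using order_tendstoD(2)[OF alim u1] .
  have lim2: "((\<lambda>k::nat. real k ^ 2 * exp (- C * real k powr \<kappa>)) \<longlongrightarrow> 0) sequentially"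
    using Cpos kap by real_asymp
  have ev2: "eventually (\<lambda>k. real k ^ 2 * exp (- C * real k powr \<kappa>) < 1) sequentially"
    using order_tendstoD(2)[OF lim2] by simp
  have sg: "summable (\<lambda>k::nat. real k powr (-2))" by (simp add: summable_real_powr_iff)
  have s1: "summable (\<lambda>k::nat. exp (- C * real k powr \<kappa>))"
  proof (rule summable_comparison_test_ev[OF _ sg])
    show "eventually (\<lambda>k. norm (exp (- C * real k powr \<kappa>)) \<le> real k powr (-2)) sequentially"
      using ev2 eventually_gt_at_top[of 0]
    proof eventually_elim
      case (elim k)
      then have "exp (- C * real k powr \<kappa>) \<le> 1 / real k ^ 2" by (simp add: field_simps)
      then show ?case by (simp add: powr_minus powr_realpow divide_inverse)
    qed
  qed
  have s2: "summable (\<lambda>k. exp (- real (card (evbox k :: (int^'d) set)) * F (a k) ^ N))"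
  proof (rule summable_comparison_test_ev[OF _ s1])
    show "eventually (\<lambda>k. norm (exp (- real (card (evbox k :: (int^'d) set)) * F (a k) ^ N)) \<le> exp (- C * real k powr \<kappa>)) sequentially"
      using ev_a eventually_ge_at_top[of 1]
    proof eventually_elim
      case (elim k)
      then show ?case using key[of k] by simp
    qed
  qed
  have ae: "AE \<omega> in M. eventually (\<lambda>k. \<forall>n\<ge>k. lambda1 (\<lambda>e. W e \<omega>) n \<le> 2 * real CARD('d) * a k) sequentially"
    using bc_gen[OF P indep law pos, of "\<lambda>k. k" a] s2 unfolding N_def by simp
  show ?thesis
  proof (rule AE_mp[OF ae], rule AE_I2, rule impI)
    fix \<omega> assume "eventually (\<lambda>k. \<forall>n\<ge>k. lambda1 (\<lambda>e. W e \<omega>) n \<le> 2 * real CARD('d) * a k) sequentially"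
    then show "eventually (\<lambda>n. lambda1 (\<lambda>e. W e \<omega>) n \<le> real n powr (- 1 / (2 * \<gamma>) + \<delta>)) sequentially"
      using eventually_ge_at_top[of 1]
    proof eventually_elim
      case (elim k)
      then have "lambda1 (\<lambda>e. W e \<omega>) k \<le> 2 * d * a k" unfolding d_def by simp
      also have "2 * d * a k = real k powr \<beta>" unfolding a_def using d1 by simp
      also have "\<dots> \<le> real k powr (- 1 / (2 * \<gamma>) + \<delta>)" using elim ble by (intro powr_mono) auto
      finally show ?case .
    qed
  qed
qed

end



context
  fixes M :: "'a measure" and W :: "(int^'d) set \<Rightarrow> 'a \<Rightarrow> real" and F :: "real \<Rightarrow> real"
    and \<gamma> :: real
  assumes P: "prob_space M"
    and indep: "prob_space.indep_vars M (\<lambda>_. borel) W (nn_edges :: (int^'d) set set)"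
    and law: "\<forall>e\<in>nn_edges. \<forall>u. measure M {\<omega>\<in>space M. W e \<omega> \<le> u} = F u"
    and pos: "\<forall>e\<in>nn_edges. \<forall>\<omega>\<in>space M. W e \<omega> > 0"
    and gpos: "\<gamma> > 0"
begin

interpretation prob_space M by (rule P)

lemma part2:
  assumes Fa: "\<forall>a\<in>{0..1}. F a = a powr \<gamma>" and eps: "\<epsilon> > 0"
  shows "AE \<omega> in M. eventually (\<lambda>n. lambda1 (\<lambda>e. W e \<omega>) n
           \<le> 2 * real CARD('d) * real n powr (- 1 / (2 * \<gamma>))
             * ((2 + \<epsilon>) * ln (ln (real n))) powr (1 / (2 * real CARD('d) * \<gamma>))) sequentially"
proof -
  define N where "N = 2 * CARD('d)"
  define d where "d = real CARD('d)"
  have d1: "d \<ge> 1" unfolding d_def by simp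
  have Nd: "real N = 2 * d" unfolding N_def d_def by simp
  define r where "r = 1 / (2 * d * \<gamma>)"
  have r0: "r > 0" unfolding r_def using d1 gpos by simp
  define X where "X k = (2 + \<epsilon>) * ln (real k * ln 2)" for k :: nat
  define inner where "inner k = 2 powr (-(real k + 1) * d) * X k" for k :: nat
  define a where "a k = inner k powr r" for k :: nat
  have ln2: "ln (2::real) \<ge> 2/3" by (rule ln2_ge_two_thirds)
  have Xpos: "X k > 0" if "k \<ge> 2" for k
  proof -
    have "real k \<ge> 2" using that by simp
    then have "real k * ln 2 \<ge> 2 * (2/3)" using ln2 by (intro mult_mono) auto
    then have "real k * ln 2 > 1" by simp
    then show ?thesis unfolding X_def using eps by simp
  qed
  have Xln: "X k = (2 + \<epsilon>) * ln (ln (2 ^ k))" for k unfolding X_def by (simp add: ln_realpow)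
  have inpos: "inner k > 0" if "k \<ge> 2" for k unfolding inner_def using Xpos[OF that] by simp
  define s where "s = 1 + \<epsilon>/2"
  have s1: "s > 1" unfolding s_def using eps by simp
  have key: "exp (- real (card (evbox (2^k) :: (int^'d) set)) * F (a k) ^ N) \<le> (real k * ln 2) powr (-s)"
    if k2: "k \<ge> 2" and in1: "inner k \<le> 1" for k
  proof -
    have a01: "a k \<in> {0..1}"
    proof -
      have "inner k powr r \<le> 1" using inpos[OF k2] in1 r0 by (intro powr_le1) auto
      then show ?thesis unfolding a_def by simp
    qed
    have FaN: "F (a k) ^ N = inner k"
    proof -
      have "F (a k) ^ N = (a k powr \<gamma>) ^ N" using Fa a01 by simp
      also have "\<dots> = a k powr (real N * \<gamma>)" using inpos[OF k2] unfolding a_def by (simp add: powr_power)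
      also have "\<dots> = inner k powr (r * (2 * d * \<gamma>))" unfolding a_def Nd by (simp add: powr_powr)
      also have "r * (2 * d * \<gamma>) = 1" unfolding r_def using d1 gpos by simp
      finally show ?thesis using inpos[OF k2] by simp
    qed
    have "X k / 2 \<le> real (card (evbox (2^k) :: (int^'d) set)) * inner k"
    proof -
      have "2 ^ (CARD('d) - 1) * real (2^k) ^ CARD('d) \<le> real (card (evbox (2^k) :: (int^'d) set))"
        by (rule evbox_card)
      moreover have "2 ^ (CARD('d) - 1) * real (2^k) ^ CARD('d) * inner k = X k / 2"
      proof -
        have dd: "real (CARD('d) - 1) = d - 1" unfolding d_def by (simp add: of_nat_diff)
        have e1: "(2::real) ^ (CARD('d) - 1) = 2 powr (d - 1)"
          using powr_realpow[of "2::real" "CARD('d) - 1"] unfolding dd by simp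
        have e2: "real (2^k) ^ CARD('d) = 2 powr (real k * d)"
        proof -
          have "real (2^k) ^ CARD('d) = (2::real) ^ (k * CARD('d))" by (simp add: power_mult)
          also have "\<dots> = 2 powr (real (k * CARD('d)))" by (rule powr_realpow[symmetric]) simp
          finally show ?thesis unfolding d_def by simp
        qed
        have "2 ^ (CARD('d) - 1) * real (2^k) ^ CARD('d) * inner k
            = (2 powr (d - 1) * 2 powr (real k * d) * 2 powr (-(real k + 1) * d)) * X k"
          unfolding e1 e2 inner_def by (simp only: mult.assoc)
        also have "2 powr (d - 1) * 2 powr (real k * d) * 2 powr (-(real k + 1) * d) = (2::real) powr ((d - 1) + real k * d + (-(real k + 1) * d))"
          by (simp only: powr_add)
        also have "(d - 1) + real k * d + (-(real k + 1) * d) = -1" by (simp add: algebra_simps)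
        finally show ?thesis by (simp add: powr_minus_divide)
      qed
      ultimately show ?thesis using inpos[OF k2] by (metis mult_right_mono less_imp_le)
    qed
    then have "exp (- real (card (evbox (2^k) :: (int^'d) set)) * F (a k) ^ N) \<le> exp (- (X k / 2))"
      unfolding FaN by simp
    also have "exp (- (X k / 2)) = (real k * ln 2) powr (-s)"
    proof -
      have "real k * ln 2 > 0" using k2 by simp
      then show ?thesis unfolding X_def s_def powr_def using k2 by (simp add: field_simps)
    qed
    finally show ?thesis .
  qed
  have inlim: "(inner \<longlongrightarrow> 0) sequentially" unfolding inner_def X_def using d1 eps by real_asymp
  have ev_in: "eventually (\<lambda>k. inner k < 1) sequentially" using order_tendstoD(2)[OF inlim] by simp
  have sg: "summable (\<lambda>k::nat. (ln 2) powr (-s) * real k powr (-s))"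
    using s1 by (intro summable_mult) (simp add: summable_real_powr_iff)
  have s2: "summable (\<lambda>k. exp (- real (card (evbox (2^k) :: (int^'d) set)) * F (a k) ^ N))"
  proof (rule summable_comparison_test_ev[OF _ sg])
    show "eventually (\<lambda>k. norm (exp (- real (card (evbox (2^k) :: (int^'d) set)) * F (a k) ^ N)) \<le> (ln 2) powr (-s) * real k powr (-s)) sequentially"
      using ev_in eventually_ge_at_top[of 2]
    proof eventually_elim
      case (elim k)
      have "(real k * ln 2) powr (-s) = (ln 2) powr (-s) * real k powr (-s)"
        by (simp add: powr_mult)
      then show ?case using key[of k] elim by simp
    qed
  qed
  have ae: "AE \<omega> in M. eventually (\<lambda>k. \<forall>n\<ge>2^k. lambda1 (\<lambda>e. W e \<omega>) n \<le> 2 * real CARD('d) * a k) sequentially"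
    using bc_gen[OF P indep law pos, of "\<lambda>k. 2^k" a] s2 unfolding N_def by simp
  show ?thesis
  proof (rule AE_mp[OF ae], rule AE_I2, rule impI)
    fix \<omega> assume "eventually (\<lambda>k. \<forall>n\<ge>2^k. lambda1 (\<lambda>e. W e \<omega>) n \<le> 2 * real CARD('d) * a k) sequentially"
    then obtain K where K: "\<And>k n. k \<ge> K \<Longrightarrow> n \<ge> 2^k \<Longrightarrow> lambda1 (\<lambda>e. W e \<omega>) n \<le> 2 * real CARD('d) * a k"
      unfolding eventually_sequentially by blast
    define K' where "K' = max K 2"
    show "eventually (\<lambda>n. lambda1 (\<lambda>e. W e \<omega>) n
           \<le> 2 * real CARD('d) * real n powr (- 1 / (2 * \<gamma>))
             * ((2 + \<epsilon>) * ln (ln (real n))) powr (1 / (2 * real CARD('d) * \<gamma>))) sequentially"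
      unfolding eventually_sequentially
    proof (intro exI[of _ "2^K'"] allI impI)
      fix n :: nat assume n: "n \<ge> 2^K'"
      have "n \<ge> 1" using n by (metis one_le_numeral one_le_power order_trans)
      then obtain k where k1: "2^k \<le> n" and k2: "n < 2^(k+1)" using ex_power_ivl1[of 2 n] by auto
      have kK: "k \<ge> K'"
      proof (rule ccontr)
        assume "\<not> K' \<le> k"
        then have "2^(k+1) \<le> (2::nat)^K'" by (intro power_increasing) auto
        then show False using n k2 by simp
      qed
      then have kge: "k \<ge> K" "k \<ge> 2" unfolding K'_def by auto
      have L: "lambda1 (\<lambda>e. W e \<omega>) n \<le> 2 * d * a k" using K[OF kge(1) k1] unfolding d_def by simp
      have rn: "real n > 0" using \<open>n \<ge> 1\<close> by simp
      have ak: "a k = (2 powr (-(real k + 1) * d)) powr r * X k powr r"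
        unfolding a_def inner_def using Xpos[OF kge(2)] by (simp add: powr_mult)
      have A1: "(2 powr (-(real k + 1) * d)) powr r \<le> real n powr (- 1 / (2 * \<gamma>))"
      proof -
        have "(2 powr (-(real k + 1) * d)) powr r = (2 powr (real k + 1)) powr (- 1 / (2 * \<gamma>))"
        proof -
          have ex: "(-(real k + 1) * d) * r = (real k + 1) * (- 1 / (2 * \<gamma>))"
            unfolding r_def using d1 gpos by (simp add: field_simps)
          show ?thesis by (simp only: powr_powr ex)
        qed
        also have "2 powr (real k + 1) = real (2^(k+1))"
          using powr_realpow[of "2::real" "k+1"] by (simp add: add.commute)
        also have "real (2^(k+1)) powr (- 1 / (2 * \<gamma>)) \<le> real n powr (- 1 / (2 * \<gamma>))"
        proof -
          have "n \<le> 2^(k+1)" using k2 by simp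
          then have "real n \<le> real (2^(k+1))" by (simp only: of_nat_le_iff)
          then show ?thesis using rn gpos by (intro powr_mono2') (auto simp: divide_nonneg_pos)
        qed
        finally show ?thesis .
      qed
      have A2: "X k powr r \<le> ((2 + \<epsilon>) * ln (ln (real n))) powr r"
      proof -
        have "real (2^k) \<le> real n" using k1 by (simp only: of_nat_le_iff)
        then have "(2::real)^k \<le> real n" by simp
        then have lle: "ln (2^k) \<le> ln (real n)" by (intro ln_mono) auto
        have lp: "ln ((2::real)^k) > 0" using kge by simp
        have "ln (ln (2^k)) \<le> ln (ln (real n))" by (rule ln_mono[OF lle lp])
        then have "X k \<le> (2 + \<epsilon>) * ln (ln (real n))" unfolding Xln using eps by simp
        then show ?thesis using Xpos[OF kge(2)] r0 by (intro powr_mono2) auto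
      qed
      have "a k \<le> real n powr (- 1 / (2 * \<gamma>)) * ((2 + \<epsilon>) * ln (ln (real n))) powr r"
        unfolding ak by (rule mult_mono[OF A1 A2]) auto
      then have "2 * d * a k \<le> 2 * d * (real n powr (- 1 / (2 * \<gamma>)) * ((2 + \<epsilon>) * ln (ln (real n))) powr r)"
        using d1 by simp
      then have "lambda1 (\<lambda>e. W e \<omega>) n \<le> 2 * d * (real n powr (- 1 / (2 * \<gamma>)) * ((2 + \<epsilon>) * ln (ln (real n))) powr r)"
        using L by linarith
      then show "lambda1 (\<lambda>e. W e \<omega>) n
           \<le> 2 * real CARD('d) * real n powr (- 1 / (2 * \<gamma>))
             * ((2 + \<epsilon>) * ln (ln (real n))) powr (1 / (2 * real CARD('d) * \<gamma>))"
        unfolding r_def d_def by (simp only: mult.assoc)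
    qed
  qed
qed

end

theorem corollary1p2:
  fixes M :: "'a measure" and W :: "(int^'d) set \<Rightarrow> 'a \<Rightarrow> real"
    and F :: "real \<Rightarrow> real" and \<gamma> \<delta> :: real
  assumes d2: "CARD('d) \<ge> 2"
    and P: "prob_space M"
    and indep: "prob_space.indep_vars M (\<lambda>_. borel) W (nn_edges :: (int^'d) set set)"
    and pos: "\<forall>e\<in>nn_edges. \<forall>\<omega>\<in>space M. W e \<omega> > 0"
    and law: "\<forall>e\<in>nn_edges. \<forall>u. measure M {\<omega>\<in>space M. W e \<omega> \<le> u} = F u"
    and rv: "regvar_zero F \<gamma>" and gpos: "\<gamma> > 0"
    and dpos: "\<delta> > 0"
  shows "(AE \<omega> in M. eventually (\<lambda>n. lambda1 (\<lambda>e. W e \<omega>) n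
                 \<le> real n powr (- 1 / (2 * \<gamma>) + \<delta>)) sequentially)
    \<and> ((\<forall>a\<in>{0..1}. F a = a powr \<gamma>) \<longrightarrow>
        (\<forall>\<epsilon>>0. AE \<omega> in M. eventually (\<lambda>n. lambda1 (\<lambda>e. W e \<omega>) n
           \<le> 2 * real CARD('d) * real n powr (- 1 / (2 * \<gamma>))
             * ((2 + \<epsilon>) * ln (ln (real n))) powr (1 / (2 * real CARD('d) * \<gamma>))) sequentially))"
  proof -
  have A1: "AE \<omega> in M. eventually (\<lambda>n. lambda1 (\<lambda>e. W e \<omega>) n
                 \<le> real n powr (- 1 / (2 * \<gamma>) + \<delta>)) sequentially"
    by (rule part1[OF P indep law pos gpos rv dpos])
  have A2: "(\<forall>a\<in>{0..1}. F a = a powr \<gamma>) \<longrightarrow>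
        (\<forall>\<epsilon>>0. AE \<omega> in M. eventually (\<lambda>n. lambda1 (\<lambda>e. W e \<omega>) n
           \<le> 2 * real CARD('d) * real n powr (- 1 / (2 * \<gamma>))
             * ((2 + \<epsilon>) * ln (ln (real n))) powr (1 / (2 * real CARD('d) * \<gamma>))) sequentially)"
    using part2[OF P indep law pos gpos] by blast
  show ?thesis using A1 A2 by blast
qed

end
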